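(* Consider the search algorithm AMRA* described in the context, run on a multi-resolution planning problem with $N$ resolutions. During each iteration of its outer (anytime) loop, i.e. during each call of ImprovePath, every state is expanded at most $N+1$ times.
   Context: Planning problem: a state space $\mathcal{X}$, a start state $x_s\in\mathcal{X}$, a goal set $\mathcal{G}\subset\mathcal{X}$, and an edge cost function $c:\mathcal{X}\times\mathcal{X}\to\mathbb{R}_{\ge 0}$; the cost of a path is the sum of its edge costs. There are $N$ resolutions $r=1,\dots,N$ ($r=1$ finest); resolution $r$ has a vertex set $V_r\subset\mathcal{X}$ and an action space $\mathcal{A}_r$ whose actions connect states of $V_r$ (edge set $E_r$). The anchor resolution $r=0$ uses the union action space $\mathcal{A}_0=\bigcup_{r\ge1}\mathcal{A}_r$, with $V_0=\bigcup_{r\ge1}V_r$ (taken equal to $V_1$) and edge set $E_0$; $G_0=(V_0,E_0)$. For a state $x$, $\mathrm{Resolutions}(x)=\{r\ge1: x\in V_r\}$; $\mathrm{Succs}(x,\mathcal{A}_r)$ denotes the valid successors of $x$ via actions of $\mathcal{A}_r$ (for $r=0$: all valid successors at all resolutions in $\mathrm{Resolutions}(x)$). Heuristics $h_0,\dots,h_M\ge0$ are given; $h_0$ (anchor) is consistent: $h_0(x_i)\le h_0(x_j)+c(x_i,x_j)$ for every edge; each $h_i$, $i\ge1$, is assigned a resolution $\mathrm{Res}(i)\in\{1,\dots,N\}$, every resolution receiving at least one heuristic (so $M\ge N$), and $\mathrm{Res}(0)=0$. Parameters $w_1,w_2\ge1$. AMRA*: Keep $g$-values (initially $\infty$, $g(x_s)=0$),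 back-pointers $bp$, priority queues $OPEN_0,\dots,OPEN_M$ (initially empty), sets $CLOSED_0,\dots,CLOSED_N$, and a set $INCONS$ (initially $\{x_s\}$). $\mathrm{Key}(x,i)=g(x)+w_1h_i(x)$. Outer loop (while $w_1\ge1$ and $w_2\ge1$): insert/update every $x\in INCONS$ in $OPEN_0$ with key $\mathrm{Key}(x,0)$ and clear $INCONS$; for every $x\in OPEN_0$ and every $j\in\{1,\dots,M\}$ with $\mathrm{Res}(j)\in\mathrm{Resolutions}(x)$, insert/update $x$ in $OPEN_j$ with key $\mathrm{Key}(x,j)$; clear all $CLOSED_r$; call ImprovePath and, if it returns true, publish the path obtained by following $bp$ from $x_{goal}$ to $x_s$; stop if $w_1=w_2=1$, else decrease $w_1,w_2$. ImprovePath: repeat until the open queues are exhausted: choose an inadmissible queue $i\in\{1,\dots,M\}$ (round robin); if $\min OPEN_i\le w_2\cdot\min OPEN_0$, pop the minimum $x$ of $OPEN_i$, run Expand$(x,i)$, insert $x$ into $CLOSED_{\mathrm{Res}(i)}$, and if $x\in\mathcal{G}$ set $x_{goal}=x$ and return true; otherwise pop the minimum $x$ of $OPEN_0$, run Expand$(x,0)$, insert $x$ into $CLOSED_0$, and if $x\in\mathcal{G}$ set $x_{goal}=x$ and return true. If the queues are exhausted, return false (failure). Expand$(x,i)$: let $r=\mathrm{Res}(i)$. If $i\ne0$, remove $x$ from every $OPEN_j$ with $j>0$, $j\ne i$, $\mathrm{Res}(j)=r$. For each $x'\in\mathrm{Succs}(x,\mathcal{A}_r)$ with $g(x')>g(x)+c(x,x')$: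 set $g(x')=g(x)+c(x,x')$, $bp(x')=x$; if $x'\in CLOSED_0$ insert $x'$ into $INCONS$; otherwise insert/update $x'$ in $OPEN_0$ with key $\mathrm{Key}(x',0)$, and for each $j\in\{1,\dots,M\}$ with $l=\mathrm{Res}(j)\in\mathrm{Resolutions}(x')$, $x'\notin CLOSED_l$ and $\mathrm{Key}(x',j)\le w_2\,\mathrm{Key}(x',0)$, insert/update $x'$ in $OPEN_j$ with key $\mathrm{Key}(x',j)$. *)

theory Defs
  imports Main "HOL-Library.Extended_Real"
begin

text \<open>States have type 'x. Resolutions are 1..N; the anchor resolution is 0.
  pSucc r x is Succs(x, A_r) for r >= 1; pRes i = Res(i); pH j = h_j.\<close>

record 'x prob =
  pN :: nat
  pM :: nat
  pV :: "nat \<Rightarrow> 'x set"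
  pSucc :: "nat \<Rightarrow> 'x \<Rightarrow> 'x set"
  pC :: "'x \<Rightarrow> 'x \<Rightarrow> real"
  pH :: "nat \<Rightarrow> 'x \<Rightarrow> real"
  pRes :: "nat \<Rightarrow> nat"
  pGoal :: "'x set"
  pStart :: 'x

definition resolutions :: "'x prob \<Rightarrow> 'x \<Rightarrow> nat set" where
  "resolutions P x = {r. 1 \<le> r \<and> r \<le> pN P \<and> x \<in> pV P r}"

definition succs :: "'x prob \<Rightarrow> nat \<Rightarrow> 'x \<Rightarrow> 'x set" where
  "succs P r x = (if r = 0 then (\<Union>q\<in>resolutions P x. pSucc P q x) else pSucc P r x)"

definition amra_problem :: "'x prob \<Rightarrow> bool" where
  "amra_problem P \<longleftrightarrow>
     1 \<le> pN P \<and> pN P \<le> pM P \<and>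
     (\<forall>r. 1 \<le> r \<and> r \<le> pN P \<longrightarrow> pV P r \<subseteq> pV P 1) \<and>
     (\<forall>r x. 1 \<le> r \<and> r \<le> pN P \<and> x \<in> pV P r \<longrightarrow> pSucc P r x \<subseteq> pV P r) \<and>
     (\<forall>x y. 0 \<le> pC P x y) \<and>
     (\<forall>j x. j \<le> pM P \<longrightarrow> 0 \<le> pH P j x) \<and>
     (\<forall>r x y. 1 \<le> r \<and> r \<le> pN P \<and> x \<in> pV P r \<and> y \<in> pSucc P r x
        \<longrightarrow> pH P 0 x \<le> pH P 0 y + pC P x y) \<and>
     pRes P 0 = 0 \<and>
     (\<forall>i. 1 \<le> i \<and> i \<le> pM P \<longrightarrow> 1 \<le> pRes P i \<and> pRes P i \<le> pN P) \<and>
     (\<forall>r. 1 \<le> r \<and> r \<le> pN P \<longrightarrow> (\<exists>i. 1 \<le> i \<and> i \<le> pM P \<and> pRes P i = r))"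

text \<open>A priority queue is a partial map from states to keys (insert/update = set key).
  cRR is the round-robin pointer (next inadmissible queue in 1..M), cW1/cW2 the weights,
  cFin records that ImprovePath has returned true.\<close>

record 'x cfg =
  cG :: "'x \<Rightarrow> ereal"
  cBp :: "'x \<Rightarrow> 'x option"
  cOpen :: "nat \<Rightarrow> 'x \<Rightarrow> ereal option"
  cClosed :: "nat \<Rightarrow> 'x set"
  cIncons :: "'x set"
  cRR :: nat
  cW1 :: real
  cW2 :: real
  cXgoal :: "'x option"
  cFin :: bool

definition key :: "'x prob \<Rightarrow> 'x cfg \<Rightarrow> 'x \<Rightarrow> nat \<Rightarrow> ereal" where
  "key P C x j = cG C x + ereal (cW1 C * pH P j x)"

text \<open>Minimum key of a queue; infinity for an empty queue.\<close>
definition qmin :: "('x \<Rightarrow> ereal option) \<Rightarrow> ereal" where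
  "qmin q = Inf {k. \<exists>x. q x = Some k}"

definition is_qmin :: "('x \<Rightarrow> ereal option) \<Rightarrow> 'x \<Rightarrow> bool" where
  "is_qmin q x \<longleftrightarrow> (\<exists>k. q x = Some k \<and> (\<forall>y k'. q y = Some k' \<longrightarrow> k \<le> k'))"

definition expand :: "'x prob \<Rightarrow> 'x \<Rightarrow> nat \<Rightarrow> 'x cfg \<Rightarrow> 'x cfg" where
  "expand P x i C = (let r = pRes P i;
     q1 = (\<lambda>j y. if i \<noteq> 0 \<and> 0 < j \<and> j \<le> pM P \<and> j \<noteq> i \<and> pRes P j = r \<and> y = x
                 then None else cOpen C j y);
     imp = (\<lambda>y. y \<in> succs P r x \<and> cG C x + ereal (pC P x y) < cG C y);
     C1 = C\<lparr>cG := (\<lambda>y. if imp y then cG C x + ereal (pC P x y) else cG C y)\<rparr>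
   in C1\<lparr>cBp := (\<lambda>y. if imp y then Some x else cBp C y),
         cIncons := cIncons C \<union> {y. imp y \<and> y \<in> cClosed C 0},
         cOpen := (\<lambda>j y.
            if imp y \<and> y \<notin> cClosed C 0 then
              (if j = 0 then Some (key P C1 y 0)
               else if 1 \<le> j \<and> j \<le> pM P \<and> pRes P j \<in> resolutions P y
                       \<and> y \<notin> cClosed C (pRes P j)
                       \<and> key P C1 y j \<le> ereal (cW2 C) * key P C1 y 0
                    then Some (key P C1 y j) else q1 j y)
            else q1 j y)\<rparr>)"

definition next_rr :: "'x prob \<Rightarrow> nat \<Rightarrow> nat" where
  "next_rr P k = (if k < pM P then k + 1 else 1)"

definition pop_expand :: "'x prob \<Rightarrow> 'x \<Rightarrow> nat \<Rightarrow> 'x cfg \<Rightarrow> 'x cfg" where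
  "pop_expand P x i C = (let
     C0 = C\<lparr>cRR := next_rr P (cRR C), cOpen := (cOpen C)(i := (cOpen C i)(x := None))\<rparr>;
     C1 = expand P x i C0;
     C2 = C1\<lparr>cClosed := (cClosed C1)(pRes P i := insert x (cClosed C1 (pRes P i)))\<rparr>
   in if x \<in> pGoal P then C2\<lparr>cXgoal := Some x, cFin := True\<rparr> else C2)"

definition queues_nonempty :: "'x prob \<Rightarrow> 'x cfg \<Rightarrow> bool" where
  "queues_nonempty P C \<longleftrightarrow> (\<exists>j y. j \<le> pM P \<and> cOpen C j y \<noteq> None)"

text \<open>One iteration of the ImprovePath loop. Label Some (x,i) = Expand(x,i) performed.\<close>
inductive ip_step :: "'x prob \<Rightarrow> 'x cfg \<Rightarrow> ('x \<times> nat) option \<Rightarrow> 'x cfg \<Rightarrow> bool" for P where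
  skip: "\<not> cFin C \<Longrightarrow> queues_nonempty P C \<Longrightarrow>
         qmin (cOpen C (cRR C)) \<le> ereal (cW2 C) * qmin (cOpen C 0) \<Longrightarrow>
         (\<forall>y. cOpen C (cRR C) y = None) \<Longrightarrow>
         ip_step P C None (C\<lparr>cRR := next_rr P (cRR C)\<rparr>)"
| inadm: "\<not> cFin C \<Longrightarrow> queues_nonempty P C \<Longrightarrow>
         qmin (cOpen C (cRR C)) \<le> ereal (cW2 C) * qmin (cOpen C 0) \<Longrightarrow>
         is_qmin (cOpen C (cRR C)) x \<Longrightarrow>
         ip_step P C (Some (x, cRR C)) (pop_expand P x (cRR C) C)"
| anchor: "\<not> cFin C \<Longrightarrow> queues_nonempty P C \<Longrightarrow>
         \<not> qmin (cOpen C (cRR C)) \<le> ereal (cW2 C) * qmin (cOpen C 0) \<Longrightarrow>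
         is_qmin (cOpen C 0) x \<Longrightarrow>
         ip_step P C (Some (x, 0)) (pop_expand P x 0 C)"

inductive ip_run :: "'x prob \<Rightarrow> 'x cfg \<Rightarrow> ('x \<times> nat) option list \<Rightarrow> 'x cfg \<Rightarrow> bool" for P where
  nil: "ip_run P C [] C"
| cons: "ip_step P C l C' \<Longrightarrow> ip_run P C' ls C'' \<Longrightarrow> ip_run P C (l # ls) C''"

text \<open>Preparation at the start of an outer iteration (before calling ImprovePath).\<close>
definition prep :: "'x prob \<Rightarrow> 'x cfg \<Rightarrow> 'x cfg" where
  "prep P C = (let
     o0 = (\<lambda>y. if y \<in> cIncons C then Some (key P C y 0) else cOpen C 0 y)
   in C\<lparr>cOpen := (\<lambda>j y. if j = 0 then o0 y
                        else if 1 \<le> j \<and> j \<le> pM P \<and> o0 y \<noteq> None \<and> pRes P j \<in> resolutions P y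
                        then Some (key P C y j) else cOpen C j y),
        cIncons := {}, cClosed := (\<lambda>_. {}), cFin := False\<rparr>)"

definition init_cfg :: "'x prob \<Rightarrow> real \<Rightarrow> real \<Rightarrow> nat \<Rightarrow> 'x cfg" where
  "init_cfg P w1 w2 r0 = \<lparr>cG = (\<lambda>_. \<infinity>)(pStart P := 0), cBp = (\<lambda>_. None),
      cOpen = (\<lambda>_ _. None), cClosed = (\<lambda>_. {}), cIncons = {pStart P}, cRR = r0,
      cW1 = w1, cW2 = w2, cXgoal = None, cFin = False\<rparr>"

text \<open>Configurations at which ImprovePath is called during a run of AMRA*.
  The weight-decrease rule is unspecified in the paper: any decrease staying >= 1.\<close>
inductive amra_entry :: "'x prob \<Rightarrow> 'x cfg \<Rightarrow> bool" for P where
  first: "1 \<le> w1 \<Longrightarrow> 1 \<le> w2 \<Longrightarrow> 1 \<le> r0 \<Longrightarrow> r0 \<le> pM P \<Longrightarrow>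
          amra_entry P (prep P (init_cfg P w1 w2 r0))"
| later: "amra_entry P C \<Longrightarrow> ip_run P C ls C' \<Longrightarrow>
          (cFin C' \<or> \<not> queues_nonempty P C') \<Longrightarrow>
          \<not> (cW1 C' = 1 \<and> cW2 C' = 1) \<Longrightarrow>
          1 \<le> w1' \<Longrightarrow> w1' \<le> cW1 C' \<Longrightarrow> 1 \<le> w2' \<Longrightarrow> w2' \<le> cW2 C' \<Longrightarrow>
          (w1', w2') \<noteq> (cW1 C', cW2 C') \<Longrightarrow>
          amra_entry P (prep P (C'\<lparr>cW1 := w1', cW2 := w2'\<rparr>))"

definition expansions_of :: "'x \<Rightarrow> ('x \<times> nat) option list \<Rightarrow> nat" where
  "expansions_of x ls = length (filter (\<lambda>l. \<exists>i. l = Some (x, i)) ls)"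

end

theory Submission
  imports Defs
begin

lemma no_self: "0 \<le> c \<Longrightarrow> \<not> (a + ereal c < (a::ereal))"
  by (cases a) auto

definition inv_cl :: "'x prob \<Rightarrow> 'x cfg \<Rightarrow> bool" where
  "inv_cl P C \<longleftrightarrow> (\<forall>j y. (j = 0 \<or> 1 \<le> j \<and> j \<le> pM P) \<longrightarrow> y \<in> cClosed C (pRes P j) \<longrightarrow> cOpen C j y = None)"

definition inv_all :: "'x prob \<Rightarrow> 'x cfg \<Rightarrow> bool" where
  "inv_all P C \<longleftrightarrow> 1 \<le> cRR C \<and> cRR C \<le> pM P \<and> inv_cl P C"

lemma closed_pe: "cClosed (pop_expand P x i C) = (cClosed C)(pRes P i := insert x (cClosed C (pRes P i)))"
  by (simp add: pop_expand_def expand_def Let_def)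

lemma rr_pe: "cRR (pop_expand P x i C) = next_rr P (cRR C)"
  by (simp add: pop_expand_def expand_def Let_def)

lemma next_rr_range: "1 \<le> pM P \<Longrightarrow> 1 \<le> next_rr P k \<and> next_rr P k \<le> pM P"
  by (simp add: next_rr_def)

lemma open_pe0: "cOpen (pop_expand P x i C) = cOpen (expand P x i (C\<lparr>cRR := next_rr P (cRR C), cOpen := (cOpen C)(i := (cOpen C i)(x := None))\<rparr>))"
  unfolding pop_expand_def Let_def by simp

lemma open_ex: "cOpen (expand P x i C) j y =
  (let imp = (y \<in> succs P (pRes P i) x \<and> cG C x + ereal (pC P x y) < cG C y);
       q1 = (if i \<noteq> 0 \<and> 0 < j \<and> j \<le> pM P \<and> j \<noteq> i \<and> pRes P j = pRes P i \<and> y = x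
                 then None else cOpen C j y)
   in if imp \<and> y \<notin> cClosed C 0 then
        (if j = 0 then Some (cG C x + ereal (pC P x y) + ereal (cW1 C * pH P 0 y))
         else if 1 \<le> j \<and> j \<le> pM P \<and> pRes P j \<in> resolutions P y \<and> y \<notin> cClosed C (pRes P j)
              \<and> cG C x + ereal (pC P x y) + ereal (cW1 C * pH P j y) \<le> ereal (cW2 C) * (cG C x + ereal (pC P x y) + ereal (cW1 C * pH P 0 y))
           then Some (cG C x + ereal (pC P x y) + ereal (cW1 C * pH P j y)) else q1)
      else q1)"
  unfolding expand_def Let_def key_def by (simp del: if_split)

lemma inv_pe:
  assumes A: "amra_problem P" and I: "inv_cl P C" and i: "i = 0 \<or> 1 \<le> i \<and> i \<le> pM P"
  shows "inv_cl P (pop_expand P x i C)"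
  unfolding inv_cl_def
proof (intro allI impI)
  fix j y
  assume j: "j = 0 \<or> 1 \<le> j \<and> j \<le> pM P" and yc: "y \<in> cClosed (pop_expand P x i C) (pRes P j)"
  have c0: "\<forall>x y. 0 \<le> pC P x y" and r0: "pRes P 0 = 0"
    and rr: "\<forall>i. 1 \<le> i \<and> i \<le> pM P \<longrightarrow> 1 \<le> pRes P i \<and> pRes P i \<le> pN P"
    using A unfolding amra_problem_def by auto
  have Ic: "\<And>j y. j = 0 \<or> 1 \<le> j \<and> j \<le> pM P \<Longrightarrow> y \<in> cClosed C (pRes P j) \<Longrightarrow> cOpen C j y = None"
    using I unfolding inv_cl_def by (elim disjE; simp)
  have nx: "\<not> (cG C x + ereal (pC P x x) < cG C x)" using no_self[of "pC P x x" "cG C x"] c0 by simp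
  show "cOpen (pop_expand P x i C) j y = None"
  proof (cases "y = x \<and> pRes P j = pRes P i")
    case True
    then have yx: "y = x" and rj: "pRes P j = pRes P i" by auto
    show ?thesis
    proof (cases "j = i")
      case True
      then show ?thesis using yx nx
        by (simp add: open_pe0 open_ex Let_def del: if_split)
    next
      case False
      have "i \<noteq> 0"
      proof
        assume "i = 0"
        then have "pRes P j = 0" using rj r0 by simp
        then show False using False \<open>i = 0\<close> j rr by fastforce
      qed
      moreover have "0 < j"
      proof (rule ccontr)
        assume "\<not> 0 < j"
        then have "pRes P i = 0" using rj r0 by simp
        then show False using False \<open>\<not> 0 < j\<close> i rr by fastforce
      qed
      ultimately show ?thesis using yx nx rj j False
        by (simp add: open_pe0 open_ex Let_def del: if_split)
    qed
  next
    case False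
    then have yc': "y \<in> cClosed C (pRes P j)" using yc by (auto simp: closed_pe split: if_splits)
    then have "cOpen C j y = None" using Ic[OF j] by simp
    moreover have "j = 0 \<Longrightarrow> y \<in> cClosed C 0" using yc' r0 by simp
    moreover have "cOpen C j y = None \<Longrightarrow> ((cOpen C)(i := (cOpen C i)(x := None))) j y = None"
      by auto
    ultimately show ?thesis using yc'
      by (cases "j = 0") (simp_all add: open_pe0 open_ex Let_def)
  qed
qed

lemma prob_facts:
  assumes "amra_problem P"
  shows "1 \<le> pM P" "pRes P 0 = 0" "\<And>i. 1 \<le> i \<Longrightarrow> i \<le> pM P \<Longrightarrow> 1 \<le> pRes P i \<and> pRes P i \<le> pN P"
  using assms unfolding amra_problem_def by auto

lemma step_inv:
  assumes A: "amra_problem P" and I: "inv_all P C" and S: "ip_step P C l C'"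
  shows "inv_all P C' \<and> (\<forall>r. cClosed C r \<subseteq> cClosed C' r) \<and>
    (\<forall>y i. l = Some (y, i) \<longrightarrow> y \<notin> cClosed C (pRes P i) \<and> pRes P i \<le> pN P \<and> y \<in> cClosed C' (pRes P i))"
  using S
proof cases
  case skip
  then show ?thesis using I next_rr_range[OF prob_facts(1)[OF A]]
    by (simp add: inv_all_def inv_cl_def)
next
  case (inadm x)
  have ic: "inv_cl P C" and r1: "1 \<le> cRR C" and r2: "cRR C \<le> pM P" using I by (auto simp: inv_all_def)
  obtain k where k: "cOpen C (cRR C) x = Some k" using inadm(6) by (auto simp: is_qmin_def)
  have nc: "x \<notin> cClosed C (pRes P (cRR C))"
  proof
    assume "x \<in> cClosed C (pRes P (cRR C))"
    then have "cOpen C (cRR C) x = None" using ic r1 r2 unfolding inv_cl_def by simp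
    then show False using k by simp
  qed
  have "inv_cl P C'" using inv_pe[OF A ic, of "cRR C" x] r1 r2 inadm(1,2) by simp
  moreover have "1 \<le> cRR C' \<and> cRR C' \<le> pM P" using inadm(1,2) next_rr_range[OF prob_facts(1)[OF A]] by (simp add: rr_pe)
  moreover have "pRes P (cRR C) \<le> pN P" using prob_facts(3)[OF A r1 r2] by simp
  ultimately show ?thesis using inadm(1,2) nc by (auto simp: inv_all_def closed_pe)
next
  case (anchor x)
  have ic: "inv_cl P C" using I by (auto simp: inv_all_def)
  obtain k where k: "cOpen C 0 x = Some k" using anchor(6) by (auto simp: is_qmin_def)
  have r0: "pRes P 0 = 0" using prob_facts(2)[OF A] .
  have nc: "x \<notin> cClosed C (pRes P 0)"
  proof
    assume "x \<in> cClosed C (pRes P 0)"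
    then have "cOpen C 0 x = None" using ic unfolding inv_cl_def by simp
    then show False using k by simp
  qed
  have "inv_cl P C'" using inv_pe[OF A ic, of 0 x] anchor(1,2) by simp
  moreover have "1 \<le> cRR C' \<and> cRR C' \<le> pM P" using anchor(1,2) next_rr_range[OF prob_facts(1)[OF A]] by (simp add: rr_pe)
  ultimately show ?thesis using anchor(1,2) nc r0 by (auto simp: inv_all_def closed_pe)
qed

definition rs :: "'x prob \<Rightarrow> 'x \<Rightarrow> ('x \<times> nat) option list \<Rightarrow> nat list" where
  "rs P x ls = map (\<lambda>l. pRes P (snd (the l))) (filter (\<lambda>l. \<exists>i. l = Some (x, i)) ls)"

lemma run_inv:
  assumes A: "amra_problem P"
  shows "ip_run P C ls C' \<Longrightarrow> inv_all P C \<Longrightarrow> inv_all P C' \<and>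
     (\<forall>r\<in>set (rs P x ls). x \<notin> cClosed C r \<and> r \<le> pN P) \<and> distinct (rs P x ls)"
proof (induction rule: ip_run.induct)
  case (nil C)
  then show ?case by (simp add: rs_def)
next
  case (cons C l C1 ls C2)
  have st: "inv_all P C1 \<and> (\<forall>r. cClosed C r \<subseteq> cClosed C1 r) \<and>
    (\<forall>y i. l = Some (y, i) \<longrightarrow> y \<notin> cClosed C (pRes P i) \<and> pRes P i \<le> pN P \<and> y \<in> cClosed C1 (pRes P i))"
    using step_inv[OF A cons.prems cons.hyps(1)] .
  have IH: "inv_all P C2 \<and> (\<forall>r\<in>set (rs P x ls). x \<notin> cClosed C1 r \<and> r \<le> pN P) \<and> distinct (rs P x ls)"
    using cons.IH st by blast
  show ?case
  proof (cases "\<exists>i. l = Some (x, i)")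
    case True
    then obtain i where li: "l = Some (x, i)" by blast
    have eq: "rs P x (l # ls) = pRes P i # rs P x ls" using li by (simp add: rs_def)
    have "pRes P i \<notin> set (rs P x ls)" using IH st li by blast
    then show ?thesis using IH st li eq by auto
  next
    case False
    have eq: "rs P x (l # ls) = rs P x ls" using False by (simp add: rs_def)
    show ?thesis using IH st eq by auto
  qed
qed

lemma entry_inv:
  assumes A: "amra_problem P"
  shows "amra_entry P C \<Longrightarrow> inv_all P C \<and> (\<forall>r. cClosed C r = {})"
proof (induction rule: amra_entry.induct)
  case (first w1 w2 r0)
  then show ?case by (simp add: prep_def init_cfg_def Let_def inv_all_def inv_cl_def)
next
  case (later C ls C' w1' w2')
  have "inv_all P C'" using run_inv[OF A later.hyps(2)] later.IH by blast
  then show ?case by (simp add: prep_def Let_def inv_all_def inv_cl_def)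
qed

theorem theorem1:
  fixes P :: "'x prob" and C0 C1 :: "'x cfg" and ls :: "('x \<times> nat) option list" and x :: 'x
  assumes "amra_problem P"
    and "amra_entry P C0"
    and "ip_run P C0 ls C1"
  shows "expansions_of x ls \<le> pN P + 1"
proof -
  have R: "(\<forall>r\<in>set (rs P x ls). x \<notin> cClosed C0 r \<and> r \<le> pN P) \<and> distinct (rs P x ls)"
    using run_inv[OF assms(1) assms(3)] entry_inv[OF assms(1) assms(2)] by blast
  have "expansions_of x ls = length (rs P x ls)" by (simp add: rs_def expansions_of_def)
  also have "\<dots> = card (set (rs P x ls))" using R by (simp add: distinct_card)
  also have "\<dots> \<le> card {0..pN P}" using R by (intro card_mono) auto
  also have "\<dots> = pN P + 1" by simp
  finally show ?thesis .
qed

end
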